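(* Let $\overline{C}_n$ denote the graph complement of the cycle graph $C_n$. Then $\tau(\overline{C}_n)\to e$ as $n\to\infty$, where $e$ is Euler's number.
   Context: For a finite simple graph $G$, $K=D-A$ is its Kirchhoff matrix (degree matrix minus adjacency matrix), ${\rm Det}(K)$ its pseudo-determinant (product of non-zero eigenvalues with multiplicity), and $\tau(G)={\rm det}(1+K)/{\rm Det}(K)=\prod_{\lambda\neq0}(1+1/\lambda)$, the product running over the non-zero eigenvalues of $K$. *)

theory Defs
  imports "Jordan_Normal_Form.Char_Poly" "HOL-Computational_Algebra.Polynomial"
begin

text \<open>Simple graphs on the vertex set {0..<n}, given by an adjacency predicate.\<close>

definition cycle_adj :: "nat \<Rightarrow> nat \<Rightarrow> nat \<Rightarrow> bool" where
  "cycle_adj n i j \<longleftrightarrow> i < n \<and> j < n \<and> i \<noteq> j \<and> (j = (i + 1) mod n \<or> i = (j + 1) mod n)"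

definition compl_adj :: "nat \<Rightarrow> (nat \<Rightarrow> nat \<Rightarrow> bool) \<Rightarrow> nat \<Rightarrow> nat \<Rightarrow> bool" where
  "compl_adj n A i j \<longleftrightarrow> i < n \<and> j < n \<and> i \<noteq> j \<and> \<not> A i j"

definition kirchhoff :: "nat \<Rightarrow> (nat \<Rightarrow> nat \<Rightarrow> bool) \<Rightarrow> real mat" where
  "kirchhoff n A = mat n n (\<lambda>(i, j). if i = j then real (card {k. k < n \<and> A i k})
                                      else if A i j then -1 else 0)"

definition eigenvalues_mset :: "real mat \<Rightarrow> complex multiset" where
  "eigenvalues_mset M = proots (char_poly (map_mat complex_of_real M))"

definition pdet :: "real mat \<Rightarrow> complex" where
  "pdet M = prod_mset (filter_mset (\<lambda>x. x \<noteq> 0) (eigenvalues_mset M))"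

definition tau :: "nat \<Rightarrow> (nat \<Rightarrow> nat \<Rightarrow> bool) \<Rightarrow> complex" where
  "tau n A = complex_of_real (det (1\<^sub>m n + kirchhoff n A)) / pdet (kirchhoff n A)"

end

theory Submission imports Defs "HOL-Analysis.Complex_Transcendental" begin

definition W :: "nat \<Rightarrow> complex" where "W n = cis (2 * pi / n)"

lemma W_pow: "W n ^ j = cis (2 * pi * j / n)"
  unfolding W_def Complex.DeMoivre by (simp add: mult.commute)

lemma W_pow_eq_1: assumes "n \<ge> 1" shows "W n ^ j = 1 \<longleftrightarrow> n dvd j"
proof -
  have "W n ^ j = exp(2 * of_real pi * \<i> * of_nat j / of_nat n)"
    unfolding W_pow cis_conv_exp by (simp add: field_simps)
  thus ?thesis using complex_root_unity_eq_1[OF assms] by simp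
qed

lemma W_pow_n: assumes "n \<ge> 1" shows "W n ^ n = 1"
  using W_pow_eq_1[OF assms] by simp

lemma W_pow_mod: assumes "n \<ge> 1" shows "W n ^ (a mod n * k) = W n ^ (a * k)"
proof -
  have "a * k = a mod n * k + n * (a div n * k)"
    by (metis add.commute add_mult_distrib mult.assoc mult.commute div_mult_mod_eq)
  hence "W n ^ (a * k) = W n ^ (a mod n * k) * (W n ^ n) ^ (a div n * k)"
    by (simp add: power_add power_mult)
  thus ?thesis using W_pow_n[OF assms] by simp
qed

lemma W_geom: assumes "n \<ge> 1"
  shows "(\<Sum>l<n. (W n ^ e) ^ l) = (if n dvd e then of_nat n else 0)"
proof (cases "n dvd e")
  case True
  hence "W n ^ e = 1" using W_pow_eq_1[OF assms] by simp
  thus ?thesis using True by simp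
next
  case False
  hence ne: "W n ^ e \<noteq> 1" using W_pow_eq_1[OF assms] by simp
  have "(W n ^ e) ^ n = 1" by (metis W_pow_n assms power_mult power_mult_distrib mult.commute power_one)
  thus ?thesis using geometric_sum[OF ne, of n] False by simp
qed

lemma W_cos: assumes "n \<ge> 1" "k \<le> n"
  shows "W n ^ k + W n ^ ((n - 1) * k) = of_real (2 * cos (2 * pi * k / n))"
proof -
  have "real ((n - 1) * k) = real n * k - k" using assms by (simp add: of_nat_diff algebra_simps)
  hence e: "2 * pi * real ((n - 1) * k) / n = 2 * pi * real k + (- (2 * pi * k / n))"
    using assms by (simp add: field_simps)
  have "W n ^ ((n - 1) * k) = cis (- (2 * pi * k / n))"
    unfolding W_pow e cis_mult[symmetric]
    using cis_multiple_2pi[of "real k"] by simp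
  thus ?thesis unfolding W_pow by (simp add: complex_eq_iff cos_of_real)
qed


lemma nx_eq: "(j::nat) < n \<Longrightarrow> (j + 1) mod n = (if j + 1 = n then 0 else j + 1)"
  by (cases "j + 1 = n") auto
lemma pv_eq: assumes "(j::nat) < n" shows "(j + n - 1) mod n = (if j = 0 then n - 1 else j - 1)"
proof (cases "j = 0")
  case False
  hence "j + n - 1 = (j - 1) + n" using assms by simp
  hence "(j + n - 1) mod n = ((j - 1) + n) mod n" by simp
  also have "\<dots> = j - 1" using assms by (simp only: mod_add_self2) simp
  finally show ?thesis using False by simp
qed (use assms in simp)

lemma cyc_iff: assumes "n \<ge> 3" "j < n" "l < n"
  shows "cycle_adj n j l \<longleftrightarrow> (l = (j + 1) mod n \<or> l = (j + n - 1) mod n)"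
  unfolding cycle_adj_def nx_eq[OF assms(2)] pv_eq[OF assms(2)] nx_eq[OF assms(3)]
  using assms by auto

lemma nbr_facts: assumes "n \<ge> 3" "(j::nat) < n"
  shows "(j + 1) mod n \<noteq> j" "(j + n - 1) mod n \<noteq> j" "(j + 1) mod n \<noteq> (j + n - 1) mod n"
    "(j + 1) mod n < n" "(j + n - 1) mod n < n"
  unfolding nx_eq[OF assms(2)] pv_eq[OF assms(2)] using assms by auto

lemma deg_compl: assumes "n \<ge> 3" "j < n"
  shows "card {k. k < n \<and> compl_adj n (cycle_adj n) j k} = n - 3"
proof -
  let ?a = "(j + 1) mod n" and ?b = "(j + n - 1) mod n"
  have "{k. k < n \<and> compl_adj n (cycle_adj n) j k} = {..<n} - {j, ?a, ?b}"
    unfolding compl_adj_def using cyc_iff[OF assms(1,2)] assms by auto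
  moreover have "card {j, ?a, ?b} = 3" using nbr_facts[OF assms] by simp
  moreover have "{j, ?a, ?b} \<subseteq> {..<n}" using nbr_facts[OF assms] assms by simp
  ultimately show ?thesis by (simp add: card_Diff_subset)
qed

lemma kirch_entry: assumes "n \<ge> 3" "j < n" "l < n"
  shows "kirchhoff n (compl_adj n (cycle_adj n)) $$ (j, l) =
    (if l = j then real n - 2 else 0) - 1 + (if l = (j + 1) mod n then 1 else 0)
      + (if l = (j + n - 1) mod n then 1 else 0)"
proof -
  have r: "real (n - 3) = real n - 3" using assms(1) by linarith
  show ?thesis
  unfolding kirchhoff_def using assms deg_compl[OF assms(1,2)] nbr_facts[OF assms(1,2)]
    cyc_iff[OF assms]
  by (auto simp: compl_adj_def r)
qed


definition lamr :: "nat \<Rightarrow> nat \<Rightarrow> real" where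
  "lamr n k = (if k = 0 then 0 else real n - 2 + 2 * cos (2 * pi * k / n))"
definition Um :: "nat \<Rightarrow> complex mat" where "Um n = Matrix.mat n n (\<lambda>(j, k). W n ^ (j * k))"
definition Vm :: "nat \<Rightarrow> complex mat" where "Vm n = Matrix.mat n n (\<lambda>(k, l). W n ^ ((n - 1) * k * l) / of_nat n)"
definition Dm :: "nat \<Rightarrow> complex mat" where
  "Dm n = Matrix.mat n n (\<lambda>(i, j). if i = j then complex_of_real (lamr n i) else 0)"
definition Mc :: "nat \<Rightarrow> complex mat" where
  "Mc n = map_mat complex_of_real (kirchhoff n (compl_adj n (cycle_adj n)))"

lemma dvd_lemma: assumes "(j::nat) < n" "l < n" shows "n dvd (j + (n - 1) * l) \<longleftrightarrow> j = l"
proof -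
  have n1: "n \<ge> 1" using assms by linarith
  have "int (j + (n - 1) * l) = (int j - int l) + int n * int l" 
  proof -
    have "(n - 1) * l + l = n * l" using n1 by (simp add: algebra_simps diff_mult_distrib)
    hence "int ((n - 1) * l) = int n * int l - int l" by (metis add_diff_cancel_right' of_nat_add of_nat_mult)
    thus ?thesis by simp
  qed
  hence "n dvd (j + (n - 1) * l) \<longleftrightarrow> int n dvd (int j - int l)"
  proof -
    assume h: "int (j + (n - 1) * l) = (int j - int l) + int n * int l"
    have "n dvd (j + (n - 1) * l) \<longleftrightarrow> int n dvd int (j + (n - 1) * l)" by (simp only: int_dvd_int_iff)
    also have "\<dots> \<longleftrightarrow> int n dvd (int j - int l)" unfolding h by (simp add: dvd_add_left_iff)
    finally show ?thesis .
  qed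
  also have "\<dots> \<longleftrightarrow> j = l"
  proof
    assume d: "int n dvd (int j - int l)"
    show "j = l"
    proof (rule ccontr)
      assume "j \<noteq> l"
      hence "int j - int l \<noteq> 0" by simp
      from dvd_imp_le_int[OF this d] assms show False by simp
    qed
  qed simp
  finally show ?thesis .
qed

lemma carriers: "Um n \<in> carrier_mat n n" "Vm n \<in> carrier_mat n n" "Dm n \<in> carrier_mat n n" "Mc n \<in> carrier_mat n n"
  unfolding Um_def Vm_def Dm_def Mc_def kirchhoff_def by auto

lemma UV: assumes "n \<ge> 1" shows "Um n * Vm n = 1\<^sub>m n"
proof (rule eq_matI)
  fix j l assume jl: "j < dim_row (1\<^sub>m n)" "l < dim_col (1\<^sub>m n)"
  hence jl': "j < n" "l < n" by auto
  have "(Um n * Vm n) $$ (j, l) = (\<Sum>k<n. W n ^ (j * k) * (W n ^ ((n - 1) * k * l) / of_nat n))"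
    using jl' unfolding Um_def Vm_def by (simp add: scalar_prod_def lessThan_atLeast0)
  also have "\<dots> = (\<Sum>k<n. (W n ^ (j + (n - 1) * l)) ^ k) / of_nat n"
  proof -
    have "W n ^ (j * k) * W n ^ ((n - 1) * k * l) = (W n ^ (j + (n - 1) * l)) ^ k" for k
      by (simp add: power_add[symmetric] power_mult[symmetric] algebra_simps)
    thus ?thesis by (simp add: sum_divide_distrib)
  qed
  also have "\<dots> = 1\<^sub>m n $$ (j, l)"
    using W_geom[OF assms, of "j + (n - 1) * l"] dvd_lemma[OF jl'] jl' assms by auto
  finally show "(Um n * Vm n) $$ (j, l) = 1\<^sub>m n $$ (j, l)" .
qed (auto simp: Um_def Vm_def)

lemma MU_entry: assumes n: "n \<ge> 3" and jk: "j < n" "k < n"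
  shows "(Mc n * Um n) $$ (j, k) = W n ^ (j * k) * complex_of_real (lamr n k)"
proof -
  let ?a = "(j + 1) mod n" and ?b = "(j + n - 1) mod n"
  have n1: "n \<ge> 1" using n by simp
  have "(Mc n * Um n) $$ (j, k) = (\<Sum>l<n. complex_of_real (kirchhoff n (compl_adj n (cycle_adj n)) $$ (j, l)) * W n ^ (l * k))"
    using jk unfolding Um_def Mc_def kirchhoff_def by (simp add: scalar_prod_def lessThan_atLeast0)
  also have "\<dots> = (\<Sum>l<n. ((if l = j then of_nat n - 2 else 0) - 1 + (if l = ?a then 1 else 0)
      + (if l = ?b then 1 else 0)) * W n ^ (l * k))"
    by (rule sum.cong[OF refl]) (simp add: kirch_entry[OF n jk(1)])
  also have "\<dots> = (of_nat n - 2) * W n ^ (j * k) - (\<Sum>l<n. W n ^ (l * k)) + W n ^ (?a * k) + W n ^ (?b * k)"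
    using nbr_facts[OF n jk(1)] jk
    by (simp add: ring_distribs sum.distrib sum_subtractf if_distrib[of "\<lambda>x. x * _"] cong: if_cong)
  also have "W n ^ (?a * k) = W n ^ (j * k) * W n ^ k"
    unfolding W_pow_mod[OF n1] by (simp add: power_add algebra_simps)
  also have "W n ^ (?b * k) = W n ^ (j * k) * W n ^ ((n - 1) * k)"
  proof -
    have "j + n - 1 = j + (n - 1)" using n1 by simp
    thus ?thesis unfolding W_pow_mod[OF n1] by (simp add: power_add algebra_simps)
  qed
  also have "(\<Sum>l<n. W n ^ (l * k)) = (if k = 0 then of_nat n else 0)"
  proof -
    have "(\<Sum>l<n. W n ^ (l * k)) = (\<Sum>l<n. (W n ^ k) ^ l)" by (simp add: power_mult[symmetric] mult.commute)
    also have "\<dots> = (if n dvd k then of_nat n else 0)" by (rule W_geom[OF n1])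
    finally show ?thesis using jk by auto
  qed
  finally have eq: "(Mc n * Um n) $$ (j, k) = (of_nat n - 2) * W n ^ (j * k) - (if k = 0 then of_nat n else 0)
     + W n ^ (j * k) * W n ^ k + W n ^ (j * k) * W n ^ ((n - 1) * k)" .
  show ?thesis
  proof (cases "k = 0")
    case False
    have s: "W n ^ k + W n ^ ((n - 1) * k) = of_real (2 * cos (2 * pi * k / n))" using W_cos[OF n1, of k] jk by simp
    have "(Mc n * Um n) $$ (j, k) = W n ^ (j * k) * ((of_nat n - 2) + (W n ^ k + W n ^ ((n - 1) * k)))"
      unfolding eq using False by (simp add: algebra_simps)
    also have "\<dots> = W n ^ (j * k) * complex_of_real (lamr n k)"
      unfolding s lamr_def using False by simp
    finally show ?thesis .
  qed (use eq in \<open>simp add: lamr_def\<close>)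
qed

lemma MU: assumes n: "n \<ge> 3" shows "Mc n * Um n = Um n * Dm n"
proof (rule eq_matI)
  fix j k assume "j < dim_row (Um n * Dm n)" "k < dim_col (Um n * Dm n)"
  hence jk: "j < n" "k < n" using carriers[of n] by auto
  have "(Um n * Dm n) $$ (j, k) = (\<Sum>l<n. W n ^ (j * l) * (if l = k then complex_of_real (lamr n l) else 0))"
    using jk unfolding Um_def Dm_def by (simp add: scalar_prod_def lessThan_atLeast0)
  also have "\<dots> = W n ^ (j * k) * complex_of_real (lamr n k)"
    using jk by (simp add: if_distrib[of "\<lambda>x. _ * x"] cong: if_cong)
  finally show "(Mc n * Um n) $$ (j, k) = (Um n * Dm n) $$ (j, k)" using MU_entry[OF n jk] by simp
qed (use carriers[of n] in auto)


lemma VU: assumes "n \<ge> 3" shows "Vm n * Um n = 1\<^sub>m n"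
  using mat_mult_left_right_inverse[OF carriers(1,2) UV] assms by simp

lemma Mc_eq: assumes n: "n \<ge> 3" shows "Um n * Dm n * Vm n = Mc n"
proof -
  have "Um n * Dm n * Vm n = Mc n * Um n * Vm n" using MU[OF n] by simp
  also have "\<dots> = Mc n * (Um n * Vm n)" using carriers[of n] by simp
  also have "\<dots> = Mc n" using UV[of n] n carriers[of n] by simp
  finally show ?thesis .
qed

lemma sim: assumes n: "n \<ge> 3" shows "similar_mat (Mc n) (Dm n)"
  unfolding similar_mat_def similar_mat_wit_def Let_def
  using carriers[of n] UV[of n] VU[OF n] Mc_eq[OF n] n by (intro exI[of _ "Um n"] exI[of _ "Vm n"]) auto

lemma sim1: assumes n: "n \<ge> 3" shows "similar_mat (1\<^sub>m n + Mc n) (1\<^sub>m n + Dm n)"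
proof -
  have "Um n * (1\<^sub>m n + Dm n) * Vm n = (Um n + Um n * Dm n) * Vm n"
    using carriers[of n] by (simp add: mult_add_distrib_mat[OF carriers(1) one_carrier_mat carriers(3)])
  also have "\<dots> = Um n * Vm n + Um n * Dm n * Vm n"
    using carriers[of n] by (simp add: add_mult_distrib_mat[of _ n n _ _ n])
  also have "\<dots> = 1\<^sub>m n + Mc n" using UV[of n] Mc_eq[OF n] n by simp
  finally have e: "Um n * (1\<^sub>m n + Dm n) * Vm n = 1\<^sub>m n + Mc n" .
  show ?thesis
    unfolding similar_mat_def similar_mat_wit_def Let_def
    using carriers[of n] UV[of n] VU[OF n] e n by (intro exI[of _ "Um n"] exI[of _ "Vm n"]) auto
qed

lemma ut_D: "upper_triangular (Dm n)" "upper_triangular (1\<^sub>m n + Dm n)"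
  unfolding upper_triangular_def Dm_def by auto

lemma diag_D: "diag_mat (Dm n) = map (\<lambda>i. complex_of_real (lamr n i)) [0..<n]"
  "diag_mat (1\<^sub>m n + Dm n) = map (\<lambda>i. 1 + complex_of_real (lamr n i)) [0..<n]"
  unfolding diag_mat_def Dm_def by auto

lemma sum_single: "(\<Sum>a\<leftarrow>xs. {#a#}) = mset xs"
  by (induction xs) auto

lemma eig: assumes n: "n \<ge> 3"
  shows "eigenvalues_mset (kirchhoff n (compl_adj n (cycle_adj n))) = mset (map (\<lambda>i. complex_of_real (lamr n i)) [0..<n])"
proof -
  have "eigenvalues_mset (kirchhoff n (compl_adj n (cycle_adj n))) = proots (char_poly (Dm n))"
    unfolding eigenvalues_mset_def Mc_def[symmetric] using char_poly_similar[OF sim[OF n]] by simp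
  also have "char_poly (Dm n) = (\<Prod>a\<leftarrow>diag_mat (Dm n). [:- a, 1:])"
    by (rule char_poly_upper_triangular[OF carriers(3) ut_D(1)])
  also have "proots \<dots> = (\<Sum>a\<leftarrow>diag_mat (Dm n). proots [:- a, 1:])"
  proof -
    have "proots (prod_list (map (\<lambda>a. [:- a, 1:]) (diag_mat (Dm n)))) =
      sum_list (map proots (map (\<lambda>a. [:- a, 1:]) (diag_mat (Dm n))))"
    proof -
      have nz: "0 \<notin> (\<lambda>a::complex. [:- a, 1:]) ` X" for X by (auto simp: pCons_eq_0_iff)
      show ?thesis using proots_prod_list[of "map (\<lambda>a. [:- a, 1:]) (diag_mat (Dm n))"] nz by auto
    qed
    thus ?thesis by (simp add: o_def)
  qed
  also have "\<dots> = (\<Sum>a\<leftarrow>diag_mat (Dm n). {#a#})"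
    using proots_linear_factor[of "- _"] by simp
  finally show ?thesis unfolding sum_single diag_D .
qed


lemma lamr_bounds: assumes "n \<ge> 5" "k \<ge> 1"
  shows "real n - 4 \<le> lamr n k" "lamr n k \<le> real n" "lamr n k > 0"
proof -
  have r: "real n \<ge> 5" using assms by simp
  have c: "-1 \<le> cos (2 * pi * k / n)" "cos (2 * pi * k / n) \<le> 1" by auto
  show "real n - 4 \<le> lamr n k" "lamr n k \<le> real n" "lamr n k > 0"
  proof -
    have "lamr n k = real n - 2 + 2 * cos (2 * pi * k / n)" unfolding lamr_def using assms by simp
    thus "real n - 4 \<le> lamr n k" "lamr n k \<le> real n" "lamr n k > 0" using r c by linarith+
  qed
qed

lemma upt_split: "n \<ge> 1 \<Longrightarrow> [0..<n] = 0 # [1..<n]"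
  by (simp add: upt_conv_Cons)

lemma pdet_eq: assumes n: "n \<ge> 5"
  shows "pdet (kirchhoff n (compl_adj n (cycle_adj n))) = complex_of_real (\<Prod>k\<in>{1..<n}. lamr n k)"
proof -
  let ?f = "\<lambda>i. complex_of_real (lamr n i)"
  have n3: "n \<ge> 3" and n1: "n \<ge> 1" using n by auto
  have "pdet (kirchhoff n (compl_adj n (cycle_adj n))) = prod_list (filter (\<lambda>x. x \<noteq> 0) (map ?f [0..<n]))"
    unfolding pdet_def eig[OF n3] by (simp only: mset_filter[symmetric] prod_mset_prod_list)
  also have "filter (\<lambda>x. x \<noteq> 0) (map ?f [0..<n]) = map ?f [1..<n]"
  proof -
    have z: "?f 0 = 0" by (simp add: lamr_def)
    have "\<forall>x\<in>set (map ?f [1..<n]). x \<noteq> 0" using lamr_bounds(3)[OF n] by (auto simp del: of_real_eq_0_iff) (metis less_irrefl of_real_eq_0_iff)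
    hence "filter (\<lambda>x. x \<noteq> 0) (map ?f [1..<n]) = map ?f [1..<n]" by (rule filter_True)
    thus ?thesis unfolding upt_split[OF n1] using z by simp
  qed
  also have "prod_list (map ?f [1..<n]) = (\<Prod>k\<in>{1..<n}. ?f k)"
    by (metis prod.distinct_set_conv_list distinct_upt set_upt)
  finally show ?thesis by simp
qed

lemma det_eq: assumes n: "n \<ge> 5"
  shows "complex_of_real (det (1\<^sub>m n + kirchhoff n (compl_adj n (cycle_adj n)))) = complex_of_real (\<Prod>k\<in>{1..<n}. 1 + lamr n k)"
proof -
  let ?K = "kirchhoff n (compl_adj n (cycle_adj n))"
  have K: "?K \<in> carrier_mat n n" unfolding kirchhoff_def by simp
  have n3: "n \<ge> 3" and n1: "n \<ge> 1" using n by auto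
  have "complex_of_real (det (1\<^sub>m n + ?K)) = det (map_mat complex_of_real (1\<^sub>m n + ?K))"
    by (simp add: of_real_hom.hom_det)
  also have "map_mat complex_of_real (1\<^sub>m n + ?K) = 1\<^sub>m n + Mc n"
    unfolding Mc_def using K by (intro eq_matI) auto
  also have "det \<dots> = det (1\<^sub>m n + Dm n)" by (rule det_similar[OF sim1[OF n3]])
  also have "\<dots> = prod_list (diag_mat (1\<^sub>m n + Dm n))"
    by (rule det_upper_triangular[OF ut_D(2)]) (use carriers[of n] in auto)
  also have "\<dots> = prod_list (map (\<lambda>i. 1 + complex_of_real (lamr n i)) [1..<n])"
    unfolding diag_D upt_split[OF n1] using n by (simp add: lamr_def)
  also have "\<dots> = (\<Prod>k\<in>{1..<n}. 1 + complex_of_real (lamr n k))"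
    by (metis prod.distinct_set_conv_list distinct_upt set_upt)
  finally show ?thesis by simp
qed

lemma tau_eq: assumes n: "n \<ge> 5"
  shows "tau n (compl_adj n (cycle_adj n)) = complex_of_real (\<Prod>k\<in>{1..<n}. 1 + 1 / lamr n k)"
proof -
  have "tau n (compl_adj n (cycle_adj n)) = complex_of_real ((\<Prod>k\<in>{1..<n}. 1 + lamr n k) / (\<Prod>k\<in>{1..<n}. lamr n k))"
    unfolding tau_def det_eq[OF n] pdet_eq[OF n] by simp
  also have "(\<Prod>k\<in>{1..<n}. 1 + lamr n k) / (\<Prod>k\<in>{1..<n}. lamr n k) = (\<Prod>k\<in>{1..<n}. (1 + lamr n k) / lamr n k)"
    by (simp add: prod_dividef)
  also have "\<dots> = (\<Prod>k\<in>{1..<n}. 1 + 1 / lamr n k)"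
  proof (intro prod.cong refl)
    fix x assume "x \<in> {1..<n}"
    hence "lamr n x \<noteq> 0" using lamr_bounds(3)[OF n, of x] by auto
    thus "(1 + lamr n x) / lamr n x = 1 + 1 / lamr n x" by (simp add: add_divide_distrib)
  qed
  finally show ?thesis .
qed


definition tt :: "nat \<Rightarrow> real" where "tt n = (\<Prod>k\<in>{1..<n}. 1 + 1 / lamr n k)"

lemma tt_bounds: assumes n: "n \<ge> 5"
  shows "(1 + 1 / real n) ^ (n - 1) \<le> tt n" "tt n \<le> (1 + 1 / (real n - 4)) ^ (n - 1)"
proof -
  have r: "real n \<ge> 5" using n by simp
  have "(\<Prod>k\<in>{1..<n}. 1 + 1 / real n) \<le> tt n" unfolding tt_def
  proof (rule prod_mono)
    fix k assume "k \<in> {1..<n}"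
    hence b: "real n - 4 \<le> lamr n k" "lamr n k \<le> real n" "lamr n k > 0" using lamr_bounds[OF n, of k] by auto
    have "1 / real n \<le> 1 / lamr n k" using b by (intro divide_left_mono) auto
    thus "0 \<le> 1 + 1 / real n \<and> 1 + 1 / real n \<le> 1 + 1 / lamr n k" by simp
  qed
  thus "(1 + 1 / real n) ^ (n - 1) \<le> tt n" by simp
  have "tt n \<le> (\<Prod>k\<in>{1..<n}. 1 + 1 / (real n - 4))" unfolding tt_def
  proof (rule prod_mono)
    fix k assume "k \<in> {1..<n}"
    hence b: "real n - 4 \<le> lamr n k" "lamr n k \<le> real n" "lamr n k > 0" using lamr_bounds[OF n, of k] by auto
    have "1 / lamr n k \<le> 1 / (real n - 4)" using b r by (intro divide_left_mono) auto
    thus "0 \<le> 1 + 1 / lamr n k \<and> 1 + 1 / lamr n k \<le> 1 + 1 / (real n - 4)" using b by simp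
  qed
  thus "tt n \<le> (1 + 1 / (real n - 4)) ^ (n - 1)" by simp
qed

lemma lower_lim: "(\<lambda>n. (1 + 1 / real n) ^ (n - 1)) \<longlonglongrightarrow> exp 1"
proof -
  have "(\<lambda>n. (1 + 1 / real n) ^ n / (1 + 1 / real n)) \<longlonglongrightarrow> exp 1 / (1 + 0)"
    by (intro tendsto_divide tendsto_add tendsto_const lim_inverse_n' tendsto_exp_limit_sequentially[of 1, simplified]) auto
  moreover have "\<forall>\<^sub>F n in sequentially. (1 + 1 / real n) ^ n / (1 + 1 / real n) = (1 + 1 / real n) ^ (n - 1)"
    using eventually_gt_at_top[of "0::nat"]
  proof eventually_elim
    case (elim n)
    then obtain m where "n = Suc m" by (cases n) auto
    moreover have "1 + 1 / real n > 0" by (intro add_pos_nonneg) auto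
    ultimately show ?case by simp
  qed
  ultimately show ?thesis by (simp add: tendsto_cong)
qed

lemma upper_lim: "(\<lambda>n. (1 + 1 / (real n - 4)) ^ (n - 1)) \<longlonglongrightarrow> exp 1"
proof (rule LIMSEQ_offset[where k = 4])
  have "(\<lambda>m. (1 + 1 / real m) ^ m * (1 + 1 / real m) ^ 3) \<longlonglongrightarrow> exp 1 * (1 + 0) ^ 3"
    by (intro tendsto_mult tendsto_power tendsto_add tendsto_const lim_inverse_n' tendsto_exp_limit_sequentially[of 1, simplified])
  moreover have "(1 + 1 / real m) ^ m * (1 + 1 / real m) ^ 3 = (1 + 1 / (real (m + 4) - 4)) ^ (m + 4 - 1)" for m
    by (simp add: power_add[symmetric] add.commute)
  ultimately show "(\<lambda>m. (1 + 1 / (real (m + 4) - 4)) ^ (m + 4 - 1)) \<longlonglongrightarrow> exp 1" by simp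
qed

lemma tt_lim: "tt \<longlonglongrightarrow> exp 1"
  by (rule tendsto_sandwich[OF _ _ lower_lim upper_lim])
     (use tt_bounds in \<open>auto intro: eventually_mono[OF eventually_ge_at_top[of "5::nat"]]\<close>)

theorem mainTheorem2:
  shows "(\<lambda>n. tau n (compl_adj n (cycle_adj n))) \<longlonglongrightarrow> complex_of_real (exp 1)"
proof -
  have "(\<lambda>n. complex_of_real (tt n)) \<longlonglongrightarrow> complex_of_real (exp 1)"
    by (rule tendsto_of_real[OF tt_lim])
  moreover have "\<forall>\<^sub>F n in sequentially. complex_of_real (tt n) = tau n (compl_adj n (cycle_adj n))"
    using eventually_ge_at_top[of "5::nat"] by eventually_elim (simp add: tau_eq tt_def)
  ultimately show ?thesis by (simp add: tendsto_cong)
qed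

end
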